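(* Let $L$ be a regular pseudocomplemented de Morgan algebra with dual $pm$-space $P$. If there exist $x,y\in P$ with $\ell_\zeta(x,y)=n$ for some $1\le n<\omega$, then $L$ does not satisfy the identity $(x\wedge x^{\prime\ast})^{(n-1)(\prime\ast)}\approx(x\wedge x^{\prime\ast})^{n(\prime\ast)}$.
   Context: A $pm$-algebra is $(L;\wedge,\vee,{}^\ast,{}^\prime,0,1)$ with bounded distributive lattice reduct, pseudocomplement ${}^\ast$ and de Morgan involution ${}^\prime$; it is regular if any two congruences sharing a class are equal. Its dual $pm$-space $(P;\tau,\le,\zeta)$ is its Priestley space of prime ideals with the order-reversing involution $\zeta(I)=\{a:a'\notin I\}$. Notation: $x^{0(\prime\ast)}=x$, $x^{(k+1)(\prime\ast)}=((x^{k(\prime\ast)})')^\ast$. $\ell(x,y)$ is the distance between $x$ and $y$ in the comparability graph of $(P;\le)$ ($0$ if $x=y$, $\infty$ if not connected). The $\zeta$-distance is $\ell_\zeta(x,y)=\min\{\ell(x,y),\ell(x,\zeta(y))\}$. *)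

theory Defs
  imports Main "HOL-Library.Extended_Nat"
begin
unbundle lattice_syntax

text \<open>A pm-algebra: the carrier is the whole type 'a, a bounded distributive lattice;
  pc is the pseudocomplement (written x^*), dm the de Morgan involution (written x').\<close>

definition is_pseudocomplement :: "('a::{bounded_lattice,distrib_lattice} \<Rightarrow> 'a) \<Rightarrow> bool" where
  "is_pseudocomplement pc \<longleftrightarrow> (\<forall>a b. a \<sqinter> b = bot \<longleftrightarrow> b \<le> pc a)"

definition is_de_morgan_inv :: "('a::{bounded_lattice,distrib_lattice} \<Rightarrow> 'a) \<Rightarrow> bool" where
  "is_de_morgan_inv dm \<longleftrightarrow> (\<forall>a. dm (dm a) = a) \<and> (\<forall>a b. dm (a \<squnion> b) = dm a \<sqinter> dm b)"

definition pm_algebra :: "('a::{bounded_lattice,distrib_lattice} \<Rightarrow> 'a) \<Rightarrow> ('a \<Rightarrow> 'a) \<Rightarrow> bool" where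
  "pm_algebra pc dm \<longleftrightarrow> is_pseudocomplement pc \<and> is_de_morgan_inv dm"

definition pm_congruence :: "('a::{bounded_lattice,distrib_lattice} \<Rightarrow> 'a) \<Rightarrow> ('a \<Rightarrow> 'a) \<Rightarrow> ('a \<Rightarrow> 'a \<Rightarrow> bool) \<Rightarrow> bool" where
  "pm_congruence pc dm \<theta> \<longleftrightarrow> equivp \<theta>
     \<and> (\<forall>a b c d. \<theta> a b \<longrightarrow> \<theta> c d \<longrightarrow> \<theta> (a \<sqinter> c) (b \<sqinter> d))
     \<and> (\<forall>a b c d. \<theta> a b \<longrightarrow> \<theta> c d \<longrightarrow> \<theta> (a \<squnion> c) (b \<squnion> d))
     \<and> (\<forall>a b. \<theta> a b \<longrightarrow> \<theta> (pc a) (pc b))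
     \<and> (\<forall>a b. \<theta> a b \<longrightarrow> \<theta> (dm a) (dm b))"

definition pm_regular :: "('a::{bounded_lattice,distrib_lattice} \<Rightarrow> 'a) \<Rightarrow> ('a \<Rightarrow> 'a) \<Rightarrow> bool" where
  "pm_regular pc dm \<longleftrightarrow> (\<forall>\<theta> \<phi>. pm_congruence pc dm \<theta> \<longrightarrow> pm_congruence pc dm \<phi> \<longrightarrow>
      (\<exists>a b. {x. \<theta> a x} = {x. \<phi> b x}) \<longrightarrow> \<theta> = \<phi>)"

text \<open>Prime ideals (points of the dual Priestley space), ordered by inclusion.\<close>
definition prime_ideal :: "'a::{bounded_lattice,distrib_lattice} set \<Rightarrow> bool" where
  "prime_ideal I \<longleftrightarrow> I \<noteq> {} \<and> I \<noteq> UNIV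
     \<and> (\<forall>a b. a \<in> I \<longrightarrow> b \<le> a \<longrightarrow> b \<in> I)
     \<and> (\<forall>a b. a \<in> I \<longrightarrow> b \<in> I \<longrightarrow> a \<squnion> b \<in> I)
     \<and> (\<forall>a b. a \<sqinter> b \<in> I \<longrightarrow> a \<in> I \<or> b \<in> I)"

definition dual_space :: "'a::{bounded_lattice,distrib_lattice} set set" where
  "dual_space = {I. prime_ideal I}"

definition zeta :: "('a \<Rightarrow> 'a) \<Rightarrow> 'a set \<Rightarrow> 'a set" where
  "zeta dm I = {a. dm a \<notin> I}"

definition comp_path :: "'b set set \<Rightarrow> 'b set \<Rightarrow> 'b set \<Rightarrow> nat \<Rightarrow> bool" where
  "comp_path P x y k \<longleftrightarrow> (\<exists>p :: nat \<Rightarrow> 'b set. p 0 = x \<and> p k = y \<and> (\<forall>i\<le>k. p i \<in> P)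
      \<and> (\<forall>i<k. p i \<noteq> p (Suc i) \<and> (p i \<subseteq> p (Suc i) \<or> p (Suc i) \<subseteq> p i)))"

definition comp_dist :: "'b set set \<Rightarrow> 'b set \<Rightarrow> 'b set \<Rightarrow> enat" where
  "comp_dist P x y = (if \<exists>k. comp_path P x y k then enat (LEAST k. comp_path P x y k) else \<infinity>)"

definition zeta_dist :: "('a::{bounded_lattice,distrib_lattice} \<Rightarrow> 'a) \<Rightarrow> 'a set \<Rightarrow> 'a set \<Rightarrow> enat" where
  "zeta_dist dm x y = min (comp_dist dual_space x y) (comp_dist dual_space x (zeta dm y))"

text \<open>x^{k('*)}: k-fold iteration of x \<mapsto> (x')^*.\<close>
definition pstar_iter :: "('a \<Rightarrow> 'a) \<Rightarrow> ('a \<Rightarrow> 'a) \<Rightarrow> nat \<Rightarrow> 'a \<Rightarrow> 'a" where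
  "pstar_iter pc dm k = (pc \<circ> dm) ^^ k"

end

theory Submission
  imports Defs
begin

unbundle lattice_syntax

locale pma =
  fixes pc dm :: "'a::{bounded_lattice,distrib_lattice} \<Rightarrow> 'a"
  assumes pma: "pm_algebra pc dm"
begin

lemma pc_iff: "a \<sqinter> b = bot \<longleftrightarrow> b \<le> pc a"
  using pma unfolding pm_algebra_def is_pseudocomplement_def by blast
lemma dm_inv[simp]: "dm (dm a) = a"
  using pma unfolding pm_algebra_def is_de_morgan_inv_def by blast
lemma dm_sup: "dm (a \<squnion> b) = dm a \<sqinter> dm b"
  using pma unfolding pm_algebra_def is_de_morgan_inv_def by blast
lemma dm_inf: "dm (a \<sqinter> b) = dm a \<squnion> dm b"
proof -
  have "dm (dm a \<squnion> dm b) = a \<sqinter> b" by (simp add: dm_sup)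
  then have "dm (a \<sqinter> b) = dm (dm (dm a \<squnion> dm b))" by simp
  then show ?thesis by simp
qed
lemma dm_anti: "a \<le> b \<Longrightarrow> dm b \<le> dm a"
proof -
  assume "a \<le> b"
  then have "dm b = dm (a \<squnion> b)" by (simp add: sup.absorb2)
  also have "\<dots> = dm a \<sqinter> dm b" by (rule dm_sup)
  finally show ?thesis by (metis inf.cobounded1)
qed
lemma dm_top[simp]: "dm top = bot"
proof -
  have "dm top \<le> dm (dm bot)" by (rule dm_anti) simp
  then show ?thesis by (simp add: bot_unique)
qed
lemma dm_bot[simp]: "dm bot = top"
  by (metis dm_inv dm_top)
lemma dm_eq_iff: "dm a = dm b \<longleftrightarrow> a = b" by (metis dm_inv)
lemma dm_le_iff: "dm a \<le> dm b \<longleftrightarrow> b \<le> a" by (metis dm_inv dm_anti)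

lemma pc_inf[simp]: "a \<sqinter> pc a = bot" using pc_iff by blast
lemma pc_inf2[simp]: "pc a \<sqinter> a = bot" using pc_inf by (simp add: inf_commute)
lemma pc_le: "a \<sqinter> b = bot \<Longrightarrow> b \<le> pc a" using pc_iff by blast
lemma bot_mono: "(x::'a) \<le> y \<Longrightarrow> y \<sqinter> z = bot \<Longrightarrow> x \<sqinter> z = bot"
proof -
  assume 1: "x \<le> y" and 2: "y \<sqinter> z = bot"
  have "x \<sqinter> z \<le> y \<sqinter> z" using 1 by (simp add: le_infI1)
  then have "x \<sqinter> z \<le> bot" by (simp only: 2)
  then show ?thesis by (simp add: bot_unique)
qed
lemma pc_anti: "a \<le> b \<Longrightarrow> pc b \<le> pc a"
  by (rule pc_le, rule bot_mono[of a b], assumption, rule pc_inf)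
lemma pc_pc: "a \<le> pc (pc a)"
  by (rule pc_le) simp
lemma pc3: "pc (pc (pc a)) = pc a"
  by (meson order.antisym pc_anti pc_pc)
lemma pc_bot[simp]: "pc bot = top"
  using pc_le[of bot top] by (simp add: top_le)
lemma pc_top[simp]: "pc top = bot"
proof -
  have "top \<sqinter> pc top = bot" by (rule pc_inf)
  then show ?thesis by (simp only: inf_top_left)
qed
lemma pc_sup: "pc (a \<squnion> b) = pc a \<sqinter> pc b"
proof (rule order.antisym)
  show "pc (a \<squnion> b) \<le> pc a \<sqinter> pc b" by (simp add: pc_anti)
  have e1: "a \<sqinter> (pc a \<sqinter> pc b) = bot" by (rule bot_mono[of _ a], simp, simp add: inf_assoc[symmetric])
  have "b \<sqinter> (pc a \<sqinter> pc b) = pc a \<sqinter> (b \<sqinter> pc b)" by (simp only: inf_aci)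
  then have e2: "b \<sqinter> (pc a \<sqinter> pc b) = bot" by (simp only: pc_inf inf_bot_right)
  have "(a \<squnion> b) \<sqinter> (pc a \<sqinter> pc b) = (a \<sqinter> (pc a \<sqinter> pc b)) \<squnion> (b \<sqinter> (pc a \<sqinter> pc b))"
    by (rule inf_sup_distrib2)
  also have "\<dots> = bot" by (simp only: e1 e2 sup_bot_left)
  finally show "pc a \<sqinter> pc b \<le> pc (a \<squnion> b)" by (rule pc_le)
qed
lemma pcpc_inf: "pc (pc (a \<sqinter> b)) = pc (pc a) \<sqinter> pc (pc b)"
proof (rule order.antisym)
  show "pc (pc (a \<sqinter> b)) \<le> pc (pc a) \<sqinter> pc (pc b)"
    by (simp add: pc_anti)
  have eq: "b \<sqinter> (pc (a \<sqinter> b) \<sqinter> a) = (a \<sqinter> b) \<sqinter> pc (a \<sqinter> b)" by (simp only: inf_aci)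
  have 1: "pc (a \<sqinter> b) \<sqinter> a \<le> pc b"
    by (rule pc_le, subst eq, rule pc_inf)
  have "a \<sqinter> (pc (a \<sqinter> b) \<sqinter> pc (pc b)) = (pc (a \<sqinter> b) \<sqinter> a) \<sqinter> pc (pc b)" by (simp only: inf_aci)
  also have "\<dots> = bot" using bot_mono[OF 1 pc_inf[of "pc b"]] .
  finally have 2: "pc (a \<sqinter> b) \<sqinter> pc (pc b) \<le> pc a" by (rule pc_le)
  have "pc (a \<sqinter> b) \<sqinter> (pc (pc a) \<sqinter> pc (pc b)) = (pc (a \<sqinter> b) \<sqinter> pc (pc b)) \<sqinter> pc (pc a)" by (simp only: inf_aci)
  also have "\<dots> = bot" using bot_mono[OF 2 pc_inf[of "pc a"]] .
  finally show "pc (pc a) \<sqinter> pc (pc b) \<le> pc (pc (a \<sqinter> b))" by (rule pc_le)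
qed
lemma pc_inf_eq: "pc (a \<sqinter> b) = pc (pc (pc a) \<sqinter> pc (pc b))"
  by (simp add: pc3 flip: pcpc_inf)

definition g where "g a = pc (dm a)"
lemma g_inf: "g (a \<sqinter> b) = g a \<sqinter> g b"
  by (simp add: g_def dm_inf pc_sup)
lemma g_mono: "a \<le> b \<Longrightarrow> g a \<le> g b"
  by (simp add: g_def dm_anti pc_anti)
lemma gpow_inf: "(g ^^ k) (a \<sqinter> b) = (g ^^ k) a \<sqinter> (g ^^ k) b"
  by (induction k) (auto simp: g_inf)
lemma gpow_mono: "a \<le> b \<Longrightarrow> (g ^^ k) a \<le> (g ^^ k) b"
  by (induction k) (auto simp: g_mono)
lemma pstar_g: "pstar_iter pc dm k = g ^^ k"
proof -
  have "pc \<circ> dm = g" by (simp add: g_def[abs_def] comp_def)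
  then show ?thesis by (simp add: pstar_iter_def)
qed

definition theta where "theta a b \<longleftrightarrow> pc a = pc b \<and> pc (dm a) = pc (dm b)"

lemma theta_cong: "pm_congruence pc dm theta"
  unfolding pm_congruence_def
proof (intro conjI allI impI)
  show "equivp theta" by (rule equivpI) (auto simp: theta_def reflp_def symp_def transp_def)
next
  fix a b c d assume "theta a b" "theta c d"
  then show "theta (a \<sqinter> c) (b \<sqinter> d)"
    unfolding theta_def by (metis pc_inf_eq dm_inf pc_sup)
next
  fix a b c d assume "theta a b" "theta c d"
  then show "theta (a \<squnion> c) (b \<squnion> d)"
    unfolding theta_def by (metis pc_inf_eq dm_sup pc_sup)
next
  fix a b assume "theta a b"
  then show "theta (pc a) (pc b)" unfolding theta_def by simp
next
  fix a b assume "theta a b"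
  then show "theta (dm a) (dm b)" unfolding theta_def by simp
qed

lemma eq_cong: "pm_congruence pc dm (=)"
  unfolding pm_congruence_def by (simp add: identity_equivp)

lemma theta_top: "theta top x \<longleftrightarrow> top = x"
proof
  assume "theta top x"
  then have "pc (dm x) = top" unfolding theta_def by simp
  then have "dm x \<sqinter> top = bot" using pc_iff[of "dm x" top] by simp
  then have "dm x = bot" by simp
  then show "top = x" by (metis dm_inv dm_bot)
qed (simp add: theta_def)

lemma regular_inj:
  assumes reg: "pm_regular pc dm" and "pc a = pc b" "pc (dm a) = pc (dm b)"
  shows "a = b"
proof -
  have "{x. theta top x} = {x. top = x}" using theta_top by blast
  then have "theta = (=)" using reg theta_cong eq_cong unfolding pm_regular_def by blast
  then show ?thesis using assms(2,3) by (metis theta_def)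
qed

lemma regular_D:
  assumes reg: "pm_regular pc dm"
  shows "x \<sqinter> dm (pc (dm x)) \<le> y \<squnion> pc y"
proof -
  define q0 where "q0 = y \<squnion> pc y"
  define d where "d = x \<sqinter> dm (pc (dm x))"
  have pq0: "pc q0 = bot" by (simp add: q0_def pc_sup)
  have 1: "pc (q0 \<squnion> d) = pc q0" by (simp add: pc_sup pq0)
  have dd: "dm d = dm x \<squnion> pc (dm x)" by (simp add: d_def dm_inf)
  have pdd: "pc (dm d) = bot" by (simp add: dd pc_sup)
  have "pc (dm (q0 \<squnion> d)) = pc (pc (pc (dm q0)) \<sqinter> pc (pc (dm d)))"
    by (simp add: dm_sup pc_inf_eq[of "dm q0"])
  also have "\<dots> = pc (dm q0)" by (simp add: pdd pc3)
  finally have 2: "pc (dm (q0 \<squnion> d)) = pc (dm q0)" .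
  have "q0 \<squnion> d = q0" by (rule regular_inj[OF reg 1 2])
  then show ?thesis unfolding q0_def d_def by (simp add: sup.absorb_iff1)
qed

end

lemma pi_bot: "prime_ideal I \<Longrightarrow> bot \<in> I"
  unfolding prime_ideal_def by (metis bot.extremum ex_in_conv)
lemma pi_down: "prime_ideal I \<Longrightarrow> a \<in> I \<Longrightarrow> b \<le> a \<Longrightarrow> b \<in> I"
  unfolding prime_ideal_def by blast
lemma pi_top: "prime_ideal I \<Longrightarrow> top \<notin> I"
  unfolding prime_ideal_def by (metis UNIV_eq_I top.extremum)
lemma pi_sup: "prime_ideal I \<Longrightarrow> a \<squnion> b \<in> I \<longleftrightarrow> a \<in> I \<and> b \<in> I"
  unfolding prime_ideal_def by (meson sup.cobounded1 sup.cobounded2)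
lemma pi_inf: "prime_ideal I \<Longrightarrow> a \<sqinter> b \<in> I \<longleftrightarrow> a \<in> I \<or> b \<in> I"
  unfolding prime_ideal_def by (meson inf.cobounded1 inf.cobounded2)

context pma begin

lemma zeta_mem[simp]: "a \<in> zeta dm I \<longleftrightarrow> dm a \<notin> I"
  by (simp add: zeta_def)
lemma zeta_zeta[simp]: "zeta dm (zeta dm I) = I"
  by (auto simp: zeta_def)
lemma zeta_anti: "I \<subseteq> J \<Longrightarrow> zeta dm J \<subseteq> zeta dm I"
  by (auto simp: zeta_def)
lemma zeta_inj: "zeta dm I = zeta dm J \<Longrightarrow> I = J"
  by (metis zeta_zeta)
lemma zeta_prime: "prime_ideal I \<Longrightarrow> prime_ideal (zeta dm I)"
  unfolding prime_ideal_def zeta_def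
  apply (intro conjI)
  apply (metis (mono_tags, lifting) dm_bot empty_iff mem_Collect_eq top.extremum ex_in_conv UNIV_eq_I)
  apply (metis (mono_tags, lifting) UNIV_I dm_top ex_in_conv mem_Collect_eq bot.extremum)
  apply (metis (mono_tags, lifting) dm_anti mem_Collect_eq)
  apply (simp add: dm_sup, blast)
  apply (simp add: dm_inf, blast)
  done
lemma zeta_ds: "I \<in> dual_space \<Longrightarrow> zeta dm I \<in> dual_space"
  by (simp add: dual_space_def zeta_prime)

lemma pc_notin: "prime_ideal J \<Longrightarrow> a \<notin> J \<Longrightarrow> pc a \<in> J"
  using pi_inf[of J a "pc a"] pi_bot[of J] by simp

lemma g_easy: "prime_ideal J \<Longrightarrow> J \<subseteq> I \<Longrightarrow> c \<in> zeta dm J \<Longrightarrow> g c \<in> I"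
  unfolding g_def using pc_notin by auto

lemma regular_height:
  fixes I J K :: "'a set"
  assumes reg: "pm_regular pc dm" and P: "prime_ideal I" "prime_ideal J" "prime_ideal K"
    and "I \<subseteq> J" "I \<noteq> J" "J \<subseteq> K" "J \<noteq> K"
  shows False
proof -
  obtain y :: 'a where y: "y \<in> J" "y \<notin> I" using assms by blast
  obtain x :: 'a where x: "x \<in> K" "x \<notin> J" using assms by blast
  have "pc y \<in> J" using pc_notin[OF P(1) y(2)] assms by blast
  then have yJ: "y \<squnion> pc y \<in> J" using pi_sup[OF P(2)] y by simp
  have "x \<squnion> dm (pc (dm x)) = dm (dm x \<sqinter> pc (dm x))" by (simp only: dm_inf dm_inv)
  also have "\<dots> = top" by simp
  finally have xt: "x \<squnion> dm (pc (dm x)) = top" .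
  have "dm (pc (dm x)) \<notin> J"
  proof
    assume "dm (pc (dm x)) \<in> J"
    then have "x \<squnion> dm (pc (dm x)) \<in> K" using pi_sup[OF P(3)] x assms by blast
    then show False using xt pi_top[OF P(3)] by simp
  qed
  then have "x \<sqinter> dm (pc (dm x)) \<notin> J" using pi_inf[OF P(2)] x by simp
  moreover have "x \<sqinter> dm (pc (dm x)) \<in> J" by (rule pi_down[OF P(2) yJ regular_D[OF reg]])
  ultimately show False by simp
qed

end

lemma PIT:
  fixes F :: "'a::{bounded_lattice,distrib_lattice} set"
  assumes up: "\<And>a b. a \<in> F \<Longrightarrow> a \<le> b \<Longrightarrow> b \<in> F"
    and meet: "\<And>a b. a \<in> F \<Longrightarrow> b \<in> F \<Longrightarrow> a \<sqinter> b \<in> F"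
    and nb: "bot \<notin> F" and ne: "F \<noteq> {}"
  shows "\<exists>J. prime_ideal J \<and> J \<inter> F = {}"
proof -
  define A where "A = {J. (\<forall>a b. a \<in> J \<longrightarrow> b \<le> a \<longrightarrow> b \<in> J) \<and> (\<forall>a b. a \<in> J \<longrightarrow> b \<in> J \<longrightarrow> a \<squnion> b \<in> J) \<and> J \<inter> F = {}}"
  have "\<forall>C\<in>chains A. \<Union>C \<in> A"
  proof
    fix C assume C: "C \<in> chains A"
    then have CA: "C \<subseteq> A" and ch: "\<forall>X\<in>C. \<forall>Y\<in>C. X \<subseteq> Y \<or> Y \<subseteq> X"
      unfolding chains_def chain_subset_def by auto
    show "\<Union>C \<in> A"
      unfolding A_def
    proof (intro CollectI conjI allI impI)
      fix a b assume "a \<in> \<Union>C" "b \<le> a"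
      then show "b \<in> \<Union>C" using CA unfolding A_def by blast
    next
      fix a b assume "a \<in> \<Union>C" "b \<in> \<Union>C"
      then obtain X Y where XY: "X \<in> C" "Y \<in> C" "a \<in> X" "b \<in> Y" by blast
      from ch XY(1,2) have "X \<subseteq> Y \<or> Y \<subseteq> X" by blast
      then show "a \<squnion> b \<in> \<Union>C" using XY CA unfolding A_def by blast
    next
      show "\<Union>C \<inter> F = {}" using CA unfolding A_def by blast
    qed
  qed
  from Zorn_Lemma[OF this] obtain M where MA: "M \<in> A" and mx: "\<And>X. X \<in> A \<Longrightarrow> M \<subseteq> X \<Longrightarrow> X = M"
    by blast
  have Md: "\<And>a b. a \<in> M \<Longrightarrow> b \<le> a \<Longrightarrow> b \<in> M" and Ms: "\<And>a b. a \<in> M \<Longrightarrow> b \<in> M \<Longrightarrow> a \<squnion> b \<in> M"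
    and MF: "M \<inter> F = {}" using MA unfolding A_def by blast+
  have botM: "bot \<in> M"
  proof (cases "M = {}")
    case True
    have "{bot} \<in> A" unfolding A_def using nb by (auto simp: bot_unique)
    then have "{bot} = M" using mx True by blast
    then show ?thesis by blast
  next
    case False
    then obtain a where "a \<in> M" by blast
    then show ?thesis using Md by simp
  qed
  have ext: "\<exists>f\<in>F. \<exists>m\<in>M. f \<le> m \<squnion> a" if aM: "a \<notin> M" for a
  proof (rule ccontr)
    assume nex: "\<not> ?thesis"
    define Ma where "Ma = {w. \<exists>m\<in>M. w \<le> m \<squnion> a}"
    have "Ma \<in> A" unfolding A_def
    proof (intro CollectI conjI allI impI)
      fix x y assume "x \<in> Ma" "y \<le> x"
      then show "y \<in> Ma" unfolding Ma_def using order_trans by blast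
    next
      fix x y assume "x \<in> Ma" "y \<in> Ma"
      then obtain m1 m2 where "m1 \<in> M" "m2 \<in> M" "x \<le> m1 \<squnion> a" "y \<le> m2 \<squnion> a"
        unfolding Ma_def by blast
      then have m12: "m1 \<squnion> m2 \<in> M" using Ms by blast
      have "x \<le> (m1 \<squnion> m2) \<squnion> a" using \<open>x \<le> m1 \<squnion> a\<close> by (rule order_trans) (auto intro: le_supI1 le_supI2)
      moreover have "y \<le> (m1 \<squnion> m2) \<squnion> a" using \<open>y \<le> m2 \<squnion> a\<close> by (rule order_trans) (auto intro: le_supI1 le_supI2)
      ultimately have "x \<squnion> y \<le> (m1 \<squnion> m2) \<squnion> a" by simp
      note this m12
      then show "x \<squnion> y \<in> Ma" unfolding Ma_def by blast
    next
      show "Ma \<inter> F = {}" using nex unfolding Ma_def by blast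
    qed
    moreover have "M \<subseteq> Ma" unfolding Ma_def by (auto intro: sup.cobounded1)
    ultimately have "Ma = M" using mx by blast
    moreover have "a \<in> Ma" unfolding Ma_def using botM by auto
    ultimately show False using aM by simp
  qed
  have "prime_ideal M"
    unfolding prime_ideal_def
  proof (intro conjI allI impI)
    show "M \<noteq> {}" using botM by blast
    show "M \<noteq> UNIV" using ne MF by blast
    show "\<And>a b. a \<in> M \<Longrightarrow> b \<le> a \<Longrightarrow> b \<in> M" by (rule Md)
    show "\<And>a b. a \<in> M \<Longrightarrow> b \<in> M \<Longrightarrow> a \<squnion> b \<in> M" by (rule Ms)
  next
    fix a b assume ab: "a \<sqinter> b \<in> M"
    show "a \<in> M \<or> b \<in> M"
    proof (rule ccontr)
      assume "\<not> (a \<in> M \<or> b \<in> M)"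
      then obtain f1 m1 f2 m2 where f: "f1 \<in> F" "m1 \<in> M" "f1 \<le> m1 \<squnion> a" "f2 \<in> F" "m2 \<in> M" "f2 \<le> m2 \<squnion> b"
        using ext by blast
      define m where "m = m1 \<squnion> m2"
      have mM: "m \<in> M" using f Ms m_def by blast
      have "f1 \<sqinter> f2 \<le> (m \<squnion> a) \<sqinter> (m \<squnion> b)"
        using f unfolding m_def by (meson inf_mono le_supI1 le_supI2 order_trans sup.cobounded1 sup.cobounded2 sup_mono order_refl)
      also have "\<dots> = m \<squnion> (a \<sqinter> b)" by (rule sup_inf_distrib1[symmetric])
      finally have "f1 \<sqinter> f2 \<in> M" using Md Ms mM ab by blast
      moreover have "f1 \<sqinter> f2 \<in> F" using meet f by blast
      ultimately show False using MF by blast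
    qed
  qed
  then show ?thesis using MF by blast
qed

context pma begin

fun R :: "nat \<Rightarrow> 'a set \<Rightarrow> 'a set \<Rightarrow> bool" where
  "R 0 I J \<longleftrightarrow> J = I"
| "R (Suc m) I J \<longleftrightarrow> (\<exists>K. prime_ideal K \<and> K \<subseteq> I \<and> R m (zeta dm K) J)"

lemma claim:
  fixes Z :: "'a set"
  assumes Z: "prime_ideal Z"
  shows "prime_ideal I \<Longrightarrow> (\<forall>a\<in>Z. (g ^^ m) a \<in> I) \<Longrightarrow> \<exists>J. prime_ideal J \<and> Z \<subseteq> J \<and> R m I J"
proof (induction m arbitrary: I)
  case 0
  then show ?case by auto
next
  case (Suc m)
  note I = Suc.prems(1)
  have H: "g ((g ^^ m) a) \<in> I" if "a \<in> Z" for a using Suc.prems(2) that by simp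
  define F where "F = {w. \<exists>a\<in>Z. \<exists>c. c \<notin> I \<and> dm ((g ^^ m) a) \<sqinter> c \<le> w}"
  have up: "\<And>a b. a \<in> F \<Longrightarrow> a \<le> b \<Longrightarrow> b \<in> F" unfolding F_def using order_trans by blast
  have meet: "w1 \<sqinter> w2 \<in> F" if "w1 \<in> F" "w2 \<in> F" for w1 w2
  proof -
    from that obtain a1 c1 a2 c2 where A: "a1 \<in> Z" "c1 \<notin> I" "dm ((g ^^ m) a1) \<sqinter> c1 \<le> w1"
      "a2 \<in> Z" "c2 \<notin> I" "dm ((g ^^ m) a2) \<sqinter> c2 \<le> w2" unfolding F_def by blast
    have aZ: "a1 \<squnion> a2 \<in> Z" using A pi_sup[OF Z] by simp
    have cI: "c1 \<sqinter> c2 \<notin> I" using A pi_inf[OF I] by simp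
    have d1: "dm ((g ^^ m) (a1 \<squnion> a2)) \<le> dm ((g ^^ m) a1)"
      by (rule dm_anti, rule gpow_mono) simp
    have d2: "dm ((g ^^ m) (a1 \<squnion> a2)) \<le> dm ((g ^^ m) a2)"
      by (rule dm_anti, rule gpow_mono) simp
    have "dm ((g ^^ m) (a1 \<squnion> a2)) \<sqinter> (c1 \<sqinter> c2) \<le> dm ((g ^^ m) a1) \<sqinter> c1"
      using d1 by (auto intro: le_infI1 le_infI2)
    then have w1: "dm ((g ^^ m) (a1 \<squnion> a2)) \<sqinter> (c1 \<sqinter> c2) \<le> w1"
      using A(3) by (rule order_trans)
    have "dm ((g ^^ m) (a1 \<squnion> a2)) \<sqinter> (c1 \<sqinter> c2) \<le> dm ((g ^^ m) a2) \<sqinter> c2"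
      using d2 by (auto intro: le_infI1 le_infI2)
    then have w2: "dm ((g ^^ m) (a1 \<squnion> a2)) \<sqinter> (c1 \<sqinter> c2) \<le> w2"
      using A(6) by (rule order_trans)
    have "dm ((g ^^ m) (a1 \<squnion> a2)) \<sqinter> (c1 \<sqinter> c2) \<le> w1 \<sqinter> w2"
      using w1 w2 by simp
    then show "w1 \<sqinter> w2 \<in> F" unfolding F_def using aZ cI by blast
  qed
  have nb: "bot \<notin> F"
  proof
    assume "bot \<in> F"
    then obtain a c where "a \<in> Z" "c \<notin> I" "dm ((g ^^ m) a) \<sqinter> c \<le> bot" unfolding F_def by blast
    then have "c \<le> g ((g ^^ m) a)" unfolding g_def by (simp add: bot_unique pc_le)
    then have "c \<in> I" using pi_down[OF I H[OF \<open>a \<in> Z\<close>]] by simp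
    then show False using \<open>c \<notin> I\<close> by simp
  qed
  have b0: "bot \<in> Z" using pi_bot[OF Z] .
  have t0: "top \<notin> I" using pi_top[OF I] .
  have ne: "F \<noteq> {}" unfolding F_def using b0 t0 by blast
  have "\<exists>J. prime_ideal J \<and> J \<inter> F = {}"
    apply (rule PIT)
    using up apply blast
    using meet apply blast
    using nb apply blast
    using ne apply blast
    done
  then obtain J where J: "prime_ideal J" "J \<inter> F = {}" by blast
  have JI: "J \<subseteq> I"
  proof
    fix w assume "w \<in> J"
    show "w \<in> I"
    proof (rule ccontr)
      assume "w \<notin> I"
      moreover have "dm ((g ^^ m) bot) \<sqinter> w \<le> w" by simp
      ultimately have "w \<in> F" unfolding F_def using b0 by blast
      then show False using J \<open>w \<in> J\<close> by blast
    qed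
  qed
  have "\<forall>a\<in>Z. (g ^^ m) a \<in> zeta dm J"
  proof
    fix a assume "a \<in> Z"
    then have "dm ((g ^^ m) a) \<in> F" unfolding F_def using t0 by fastforce
    then show "(g ^^ m) a \<in> zeta dm J" using J by auto
  qed
  from Suc.IH[OF zeta_prime[OF J(1)] this] obtain J' where
    "prime_ideal J'" "Z \<subseteq> J'" "R m (zeta dm J) J'" by blast
  then show ?case using J(1) JI by auto
qed

end



lemma cp_zero: "comp_path P x y 0 \<longleftrightarrow> x = y \<and> x \<in> P"
  unfolding comp_path_def by auto

lemma cp_rev:
  assumes "comp_path P x y k" shows "comp_path P y x k"
proof -
  obtain p where p: "p 0 = x" "p k = y" "\<forall>i\<le>k. p i \<in> P"
    "\<forall>i<k. p i \<noteq> p (Suc i) \<and> (p i \<subseteq> p (Suc i) \<or> p (Suc i) \<subseteq> p i)"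
    using assms unfolding comp_path_def by blast
  define q where "q i = p (k - i)" for i
  have "\<forall>i<k. q i \<noteq> q (Suc i) \<and> (q i \<subseteq> q (Suc i) \<or> q (Suc i) \<subseteq> q i)"
  proof (intro allI impI)
    fix i assume "i < k"
    then have "k - i = Suc (k - Suc i)" "k - Suc i < k" by auto
    then show "q i \<noteq> q (Suc i) \<and> (q i \<subseteq> q (Suc i) \<or> q (Suc i) \<subseteq> q i)"
      using p(4) unfolding q_def by metis
  qed
  moreover have "q 0 = y" "q k = x" "\<forall>i\<le>k. q i \<in> P" using p unfolding q_def by auto
  ultimately show ?thesis unfolding comp_path_def by blast
qed

lemma cp_cons:
  assumes "x \<in> P" "x \<noteq> y" "x \<subseteq> y \<or> y \<subseteq> x" "comp_path P y z k"
  shows "comp_path P x z (Suc k)"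
proof -
  obtain p where p: "p 0 = y" "p k = z" "\<forall>i\<le>k. p i \<in> P"
    "\<forall>i<k. p i \<noteq> p (Suc i) \<and> (p i \<subseteq> p (Suc i) \<or> p (Suc i) \<subseteq> p i)"
    using assms unfolding comp_path_def by blast
  define q where "q i = (case i of 0 \<Rightarrow> x | Suc j \<Rightarrow> p j)" for i
  have "\<forall>i<Suc k. q i \<noteq> q (Suc i) \<and> (q i \<subseteq> q (Suc i) \<or> q (Suc i) \<subseteq> q i)"
  proof (intro allI impI)
    fix i assume "i < Suc k"
    then show "q i \<noteq> q (Suc i) \<and> (q i \<subseteq> q (Suc i) \<or> q (Suc i) \<subseteq> q i)"
      using p assms unfolding q_def by (cases i) auto
  qed
  moreover have "q 0 = x" "q (Suc k) = z" "\<forall>i\<le>Suc k. q i \<in> P"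
    using p assms unfolding q_def by (auto split: nat.split)
  ultimately show ?thesis unfolding comp_path_def by blast
qed

definition Dp :: "'b set set \<Rightarrow> 'b set \<Rightarrow> 'b set \<Rightarrow> nat \<Rightarrow> bool" where
  "Dp P u v m \<longleftrightarrow> (\<exists>k\<le>m. comp_path P u v k)"

lemma Dp_cons:
  assumes "x \<in> P" "x \<subseteq> y" "Dp P y z m"
  shows "Dp P x z (Suc m)"
proof (cases "x = y")
  case True then show ?thesis using assms unfolding Dp_def by (meson le_SucI)
next
  case False
  obtain k where "k \<le> m" "comp_path P y z k" using assms unfolding Dp_def by blast
  then show ?thesis using cp_cons[OF assms(1) False _ \<open>comp_path P y z k\<close>] assms(2)
    unfolding Dp_def by (meson Suc_le_mono)
qed

definition mn :: "'b set set \<Rightarrow> 'b set \<Rightarrow> bool" where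
  "mn P J \<longleftrightarrow> J \<in> P \<and> (\<forall>K\<in>P. K \<subseteq> J \<longrightarrow> K = J)"

definition hgt :: "'b set set \<Rightarrow> bool" where
  "hgt P \<longleftrightarrow> (\<forall>I J K. I \<in> P \<longrightarrow> J \<in> P \<longrightarrow> K \<in> P \<longrightarrow> I \<subseteq> J \<longrightarrow> I \<noteq> J \<longrightarrow> J \<subseteq> K \<longrightarrow> J \<noteq> K \<longrightarrow> False)"

lemma path_mn:
  assumes h: "hgt P" and p: "p 0 = u" "\<forall>i\<le>k. p i \<in> P"
    "\<forall>i<k. p i \<noteq> p (Suc i) \<and> (p i \<subseteq> p (Suc i) \<or> p (Suc i) \<subseteq> p i)"
    and u: "mn P u"
  shows "i \<le> k \<Longrightarrow> (even i \<longleftrightarrow> mn P (p i))"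
proof (induction i)
  case 0 then show ?case using u p by simp
next
  case (Suc i)
  then have ik: "i < k" by simp
  have IH: "even i \<longleftrightarrow> mn P (p i)" using Suc by simp
  have st: "p i \<noteq> p (Suc i)" "p i \<subseteq> p (Suc i) \<or> p (Suc i) \<subseteq> p i" using p(3) ik by auto
  have inP: "p i \<in> P" "p (Suc i) \<in> P" using p(2) ik by auto
  show ?case
  proof (cases "even i")
    case True
    then have "mn P (p i)" using IH by simp
    then have "p i \<subseteq> p (Suc i)" using st inP unfolding mn_def by blast
    then have "\<not> mn P (p (Suc i))" using st inP unfolding mn_def by blast
    then show ?thesis using True by simp
  next
    case False
    then have "\<not> mn P (p i)" using IH by simp
    then obtain K where K: "K \<in> P" "K \<subseteq> p i" "K \<noteq> p i" using inP unfolding mn_def by blast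
    have "\<not> p i \<subseteq> p (Suc i)" using h K st inP unfolding hgt_def by blast
    then have s: "p (Suc i) \<subseteq> p i" using st by blast
    have "mn P (p (Suc i))" unfolding mn_def
    proof (intro conjI ballI impI)
      show "p (Suc i) \<in> P" by (rule inP(2))
      fix L assume "L \<in> P" "L \<subseteq> p (Suc i)"
      then show "L = p (Suc i)" using h s st inP unfolding hgt_def by blast
    qed
    then show ?thesis using False by simp
  qed
qed

lemma path_dir:
  assumes h: "hgt P" and p: "p 0 = u" "\<forall>i\<le>k. p i \<in> P"
    "\<forall>i<k. p i \<noteq> p (Suc i) \<and> (p i \<subseteq> p (Suc i) \<or> p (Suc i) \<subseteq> p i)"
    and u: "mn P u" and ik: "i < k"
  shows "(even i \<longrightarrow> p i \<subseteq> p (Suc i)) \<and> (odd i \<longrightarrow> p (Suc i) \<subseteq> p i)"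
proof -
  have st: "p i \<noteq> p (Suc i)" "p i \<subseteq> p (Suc i) \<or> p (Suc i) \<subseteq> p i" using p(3) ik by auto
  have inP: "p i \<in> P" "p (Suc i) \<in> P" using p(2) ik by auto
  have m1: "even i \<longleftrightarrow> mn P (p i)" using path_mn[OF h p u, of i] ik by simp
  have m2: "even (Suc i) \<longleftrightarrow> mn P (p (Suc i))" using path_mn[OF h p u, of "Suc i"] ik by simp
  show ?thesis
  proof (cases "even i")
    case True
    then show ?thesis using m1 st inP unfolding mn_def by blast
  next
    case False
    then have "mn P (p (Suc i))" using m2 by simp
    then show ?thesis using False st inP unfolding mn_def by blast
  qed
qed

context pma begin

lemma cp_map:
  assumes "comp_path dual_space x y k"
  shows "comp_path dual_space (zeta dm x) (zeta dm y) k"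
proof -
  obtain p where p: "p 0 = x" "p k = y" "\<forall>i\<le>k. p i \<in> dual_space"
    "\<forall>i<k. p i \<noteq> p (Suc i) \<and> (p i \<subseteq> p (Suc i) \<or> p (Suc i) \<subseteq> p i)"
    using assms unfolding comp_path_def by blast
  define q where "q i = zeta dm (p i)" for i
  have "\<forall>i<k. q i \<noteq> q (Suc i) \<and> (q i \<subseteq> q (Suc i) \<or> q (Suc i) \<subseteq> q i)"
    using p(4) zeta_inj zeta_anti unfolding q_def by metis
  moreover have "q 0 = zeta dm x" "q k = zeta dm y" "\<forall>i\<le>k. q i \<in> dual_space"
    using p zeta_ds unfolding q_def by auto
  ultimately show ?thesis unfolding comp_path_def by blast
qed

lemma Dp_map: "Dp dual_space x y m \<Longrightarrow> Dp dual_space (zeta dm x) (zeta dm y) m"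
  unfolding Dp_def using cp_map by blast

definition zp :: "nat \<Rightarrow> 'a set \<Rightarrow> 'a set" where
  "zp m Z = (if even m then Z else zeta dm Z)"

lemma rdist:
  fixes Z :: "'a set"
  assumes Z: "prime_ideal Z"
  shows "R m I J \<Longrightarrow> Z \<subseteq> J \<Longrightarrow> \<exists>K. prime_ideal K \<and> K \<subseteq> I \<and> Dp dual_space K (zp m Z) m"
proof (induction m arbitrary: I)
  case 0
  then have "Dp dual_space Z (zp 0 Z) 0" using Z unfolding Dp_def zp_def dual_space_def by (simp add: cp_zero)
  then show ?case using 0 Z by auto
next
  case (Suc m)
  then obtain K where K: "prime_ideal K" "K \<subseteq> I" "R m (zeta dm K) J" by auto
  from Suc.IH[OF K(3) Suc.prems(2)] obtain K' where K': "prime_ideal K'" "K' \<subseteq> zeta dm K"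
    "Dp dual_space K' (zp m Z) m" by blast
  have "Dp dual_space (zeta dm K') (zeta dm (zp m Z)) m" by (rule Dp_map[OF K'(3)])
  moreover have "zeta dm (zp m Z) = zp (Suc m) Z" unfolding zp_def by simp
  moreover have "K \<subseteq> zeta dm K'" using zeta_anti[OF K'(2)] by simp
  ultimately have "Dp dual_space K (zp (Suc m) Z) (Suc m)"
    using Dp_cons[of K dual_space] K(1) unfolding dual_space_def by auto
  then show ?case using K by blast
qed

lemma DU:
  assumes "prime_ideal I" "prime_ideal J" "prime_ideal M" "J \<subseteq> I" "J \<subseteq> M" "(g ^^ m) a \<in> M"
  shows "(g ^^ (m + 2)) a \<in> I"
proof -
  have "(g ^^ m) a \<in> zeta dm (zeta dm M)" using assms by simp
  then have "g ((g ^^ m) a) \<in> zeta dm J"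
    using g_easy[OF zeta_prime[OF assms(3)] zeta_anti[OF assms(5)]] by blast
  then have "g (g ((g ^^ m) a)) \<in> I" using g_easy[OF assms(2) assms(4)] by blast
  then show ?thesis by simp
qed

lemma zeta_mn:
  assumes h: "hgt (dual_space :: 'a set set)" and t: "t \<in> dual_space" "s \<in> dual_space" "s \<noteq> t" "s \<subseteq> t \<or> t \<subseteq> s"
  shows "mn dual_space (zeta dm t) \<longleftrightarrow> \<not> mn dual_space t"
proof
  assume m: "mn dual_space (zeta dm t)"
  show "\<not> mn dual_space t"
  proof
    assume "mn dual_space t"
    then have "t \<subseteq> s" using t unfolding mn_def by blast
    then have "zeta dm s \<subseteq> zeta dm t" "zeta dm s \<noteq> zeta dm t" using zeta_anti zeta_inj t by blast+
    then show False using m zeta_ds[OF t(2)] unfolding mn_def by blast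
  qed
next
  assume "\<not> mn dual_space t"
  then obtain K where K: "K \<in> dual_space" "K \<subseteq> t" "K \<noteq> t" using t unfolding mn_def by blast
  then have Kz: "zeta dm t \<subseteq> zeta dm K" "zeta dm t \<noteq> zeta dm K" using zeta_anti zeta_inj by blast+
  show "mn dual_space (zeta dm t)" unfolding mn_def
  proof (intro conjI ballI impI)
    show "zeta dm t \<in> dual_space" using zeta_ds t by blast
    fix L assume "L \<in> dual_space" "L \<subseteq> zeta dm t"
    then show "L = zeta dm t"
      using h[unfolded hgt_def, rule_format, of L "zeta dm t" "zeta dm K"] Kz zeta_ds[OF K(1)] zeta_ds[OF t(1)]
      by blast
  qed
qed

end



context pma begin

lemma core:
  fixes u t :: "'a set" and n :: nat
  assumes h: "hgt (dual_space :: 'a set set)"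
    and E: "\<forall>a. (g ^^ (n - 1)) a \<sqinter> (g ^^ n) a \<le> (g ^^ Suc n) a"
    and n1: "1 \<le> n"
    and u: "mn dual_space u" and t: "t \<in> dual_space"
    and path: "comp_path dual_space u t n"
    and short: "\<forall>k<n. \<not> comp_path dual_space u t k \<and> \<not> comp_path dual_space u (zeta dm t) k"
  shows False
proof -
  obtain p where p: "p 0 = u" "p n = t" "\<forall>i\<le>n. p i \<in> dual_space"
    "\<forall>i<n. p i \<noteq> p (Suc i) \<and> (p i \<subseteq> p (Suc i) \<or> p (Suc i) \<subseteq> p i)"
    using path unfolding comp_path_def by blast
  have pr: "prime_ideal (p i)" if "i \<le> n" for i using p(3) that unfolding dual_space_def by auto
  have dir: "(even i \<longrightarrow> p i \<subseteq> p (Suc i)) \<and> (odd i \<longrightarrow> p (Suc i) \<subseteq> p i)" if "i < n" for i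
    using path_dir[OF h p(1) p(3) p(4) u that] .
  have uP: "prime_ideal u" using u unfolding mn_def dual_space_def by auto
  have chain: "\<forall>m a. (g ^^ m) a \<in> p (2 * j + 1) \<longrightarrow> (g ^^ (m + 2 * j + 2)) a \<in> u"
    if "2 * j + 1 \<le> n" for j
    using that
  proof (induction j)
    case 0
    have "p 0 \<subseteq> p 1" using dir[of 0] 0 by simp
    then show ?case using DU[OF uP uP pr[of 1]] 0 p(1) by simp
  next
    case (Suc j)
    have s1: "p (2 * j + 2) \<subseteq> p (2 * j + 1)" using dir[of "2 * j + 1"] Suc.prems by simp
    have s2: "p (2 * j + 2) \<subseteq> p (Suc (2 * j + 2))" using dir[of "2 * j + 2"] Suc.prems by simp
    show ?case
    proof (intro allI impI)
      fix m a assume "(g ^^ m) a \<in> p (2 * Suc j + 1)"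
      then have "(g ^^ m) a \<in> p (Suc (2 * j + 2))" by simp
      then have "(g ^^ (m + 2)) a \<in> p (2 * j + 1)"
        using DU[OF pr[of "2 * j + 1"] pr[of "2 * j + 2"] pr[of "Suc (2 * j + 2)"] s1 s2] Suc.prems by simp
      moreover have IH: "\<forall>m a. (g ^^ m) a \<in> p (2 * j + 1) \<longrightarrow> (g ^^ (m + 2 * j + 2)) a \<in> u"
        by (rule Suc.IH) (use Suc.prems in simp)
      ultimately have "(g ^^ (m + 2 + 2 * j + 2)) a \<in> u" by blast
      moreover have eq: "m + 2 * Suc j + 2 = m + 2 + 2 * j + 2" by simp
      ultimately show "(g ^^ (m + 2 * Suc j + 2)) a \<in> u" by (simp only: eq)
    qed
  qed
  define Z where "Z = (if odd n then t else zeta dm t)"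
  have tP: "prime_ideal t" using t unfolding dual_space_def by auto
  have Zp: "prime_ideal Z" unfolding Z_def using tP zeta_prime by auto
  have i: "(g ^^ Suc n) a \<in> u" if "a \<in> Z" for a
  proof (cases "odd n")
    case True
    then obtain j where j: "n = 2 * j + 1" by (metis oddE)
    have "(g ^^ 0) a \<in> p (2 * j + 1)" using that True j p(2) unfolding Z_def by simp
    then have "(g ^^ (0 + 2 * j + 2)) a \<in> u" using chain[of j] j by blast
    then show ?thesis using j by simp
  next
    case False
    then obtain j' where j': "n = 2 * j'" by (auto elim: evenE)
    define j where "j = j' - 1"
    have j: "n = 2 * j + 2" using j' n1 unfolding j_def by simp
    have s: "p n \<subseteq> p (2 * j + 1)" using dir[of "2 * j + 1"] j by simp
    have "a \<in> zeta dm (p n)" using that False p(2) unfolding Z_def by simp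
    then have "g a \<in> p (2 * j + 1)" using g_easy[OF pr[of n] s] by simp
    then have "(g ^^ 1) a \<in> p (2 * j + 1)" by simp
    moreover have c2: "2 * j + 1 \<le> n" using j by simp
    ultimately have "(g ^^ (1 + 2 * j + 2)) a \<in> u" using chain[OF c2] by blast
    moreover have "Suc n = 1 + 2 * j + 2" using j by simp
    ultimately show ?thesis by metis
  qed
  have ii: "(g ^^ (n - 1)) a \<in> u \<or> (g ^^ n) a \<in> u" if "a \<in> Z" for a
  proof -
    have "(g ^^ (n - 1)) a \<sqinter> (g ^^ n) a \<in> u" using pi_down[OF uP i[OF that]] E by blast
    then show ?thesis using pi_inf[OF uP] by blast
  qed
  have iii: "(\<forall>a\<in>Z. (g ^^ (n - 1)) a \<in> u) \<or> (\<forall>a\<in>Z. (g ^^ n) a \<in> u)"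
  proof (rule ccontr)
    assume "\<not> ?thesis"
    then obtain a1 a2 where a: "a1 \<in> Z" "(g ^^ (n - 1)) a1 \<notin> u" "a2 \<in> Z" "(g ^^ n) a2 \<notin> u" by blast
    have aZ: "a1 \<squnion> a2 \<in> Z" using a pi_sup[OF Zp] by simp
    have m1: "(g ^^ (n - 1)) a1 \<le> (g ^^ (n - 1)) (a1 \<squnion> a2)" by (rule gpow_mono) simp
    have m2: "(g ^^ n) a2 \<le> (g ^^ n) (a1 \<squnion> a2)" by (rule gpow_mono) simp
    from ii[OF aZ] show False
      using pi_down[OF uP _ m1] pi_down[OF uP _ m2] a by blast
  qed
  have Ku: "K = u" if "prime_ideal K" "K \<subseteq> u" for K
    using u that unfolding mn_def dual_space_def by auto
  from iii show False
  proof
    assume A: "\<forall>a\<in>Z. (g ^^ (n - 1)) a \<in> u"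
    obtain J where "prime_ideal J" "Z \<subseteq> J" "R (n - 1) u J" using claim[OF Zp uP A] by blast
    then obtain K where K: "prime_ideal K" "K \<subseteq> u" "Dp dual_space K (zp (n - 1) Z) (n - 1)"
      using rdist[OF Zp] by blast
    have "zp (n - 1) Z = t" unfolding zp_def Z_def using n1 by (cases "odd n") auto
    then obtain k where "k \<le> n - 1" "comp_path dual_space u t k" using K Ku unfolding Dp_def by auto
    then show False using short n1 by auto
  next
    assume A: "\<forall>a\<in>Z. (g ^^ n) a \<in> u"
    obtain J where "prime_ideal J" "Z \<subseteq> J" "R n u J" using claim[OF Zp uP A] by blast
    then obtain K where K: "prime_ideal K" "K \<subseteq> u" "Dp dual_space K (zp n Z) n"
      using rdist[OF Zp] by blast
    have "zp n Z = zeta dm t" unfolding zp_def Z_def by auto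
    then obtain k where k: "k \<le> n" "comp_path dual_space u (zeta dm t) k" using K Ku unfolding Dp_def by auto
    have kn: "k = n"
    proof (rule ccontr)
      assume "k \<noteq> n"
      then have "k < n" using k(1) by simp
      then show False using short k(2) by blast
    qed
    obtain q where q: "q 0 = u" "q n = zeta dm t" "\<forall>i\<le>n. q i \<in> dual_space"
      "\<forall>i<n. q i \<noteq> q (Suc i) \<and> (q i \<subseteq> q (Suc i) \<or> q (Suc i) \<subseteq> q i)"
      using k kn unfolding comp_path_def by blast
    have e1: "even n \<longleftrightarrow> mn dual_space (zeta dm t)" using path_mn[OF h q(1) q(3) q(4) u, of n] q(2) by simp
    have e2: "even n \<longleftrightarrow> mn dual_space t" using path_mn[OF h p(1) p(3) p(4) u, of n] p(2) by simp
    have nn: "n - 1 < n" "Suc (n - 1) = n" using n1 by auto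
    have "p (n - 1) \<noteq> t" "p (n - 1) \<subseteq> t \<or> t \<subseteq> p (n - 1)" "p (n - 1) \<in> dual_space"
      using p(4)[rule_format, OF nn(1)] p(3) p(2) nn by auto
    then have "mn dual_space (zeta dm t) \<longleftrightarrow> \<not> mn dual_space t"
      using zeta_mn[OF h t] by blast
    then show False using e1 e2 by simp
  qed
qed

end

lemma cd_eq: "comp_dist P x y = enat n \<Longrightarrow> comp_path P x y n \<and> (\<forall>k<n. \<not> comp_path P x y k)"
proof -
  assume A: "comp_dist P x y = enat n"
  then have ex: "\<exists>k. comp_path P x y k" unfolding comp_dist_def by (auto split: if_splits)
  then have "(LEAST k. comp_path P x y k) = n" using A unfolding comp_dist_def by simp
  then show ?thesis using LeastI_ex[OF ex] not_less_Least by metis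
qed

lemma cd_ge: "enat n \<le> comp_dist P x y \<Longrightarrow> \<forall>k<n. \<not> comp_path P x y k"
proof (intro allI impI notI)
  fix k assume A: "enat n \<le> comp_dist P x y" "k < n" "comp_path P x y k"
  then have "comp_dist P x y = enat (LEAST k. comp_path P x y k)" unfolding comp_dist_def by auto
  moreover have "(LEAST k. comp_path P x y k) \<le> k" using A(3) by (rule Least_le)
  ultimately show False using A(1,2) by simp
qed

theorem theorem3p7:
  fixes pc dm :: "'a::{bounded_lattice,distrib_lattice} \<Rightarrow> 'a"
    and x y :: "'a set" and n :: nat
  assumes "pm_algebra pc dm"
    and "pm_regular pc dm"
    and "x \<in> dual_space" and "y \<in> dual_space"
    and "1 \<le> n"
    and "zeta_dist dm x y = enat n"
  shows "\<not> (\<forall>a. pstar_iter pc dm (n - 1) (inf a (pc (dm a))) = pstar_iter pc dm n (inf a (pc (dm a))))"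
proof
  assume H: "\<forall>a. pstar_iter pc dm (n - 1) (inf a (pc (dm a))) = pstar_iter pc dm n (inf a (pc (dm a)))"
  interpret pma pc dm by standard (rule assms(1))
  obtain m where nm: "n = Suc m" using assms(5) by (cases n) auto
  have E: "\<forall>a. (g ^^ (n - 1)) a \<sqinter> (g ^^ n) a \<le> (g ^^ Suc n) a"
  proof
    fix a
    have ga: "inf a (pc (dm a)) = a \<sqinter> g a" by (simp add: g_def)
    have sw: "(g ^^ k) (g a) = (g ^^ Suc k) a" for k by (simp add: funpow_swap1)
    have "(g ^^ m) a \<sqinter> (g ^^ Suc m) a = (g ^^ m) (a \<sqinter> g a)" by (simp add: gpow_inf sw)
    also have "\<dots> = (g ^^ Suc m) (a \<sqinter> g a)" using H[rule_format, of a] nm by (simp add: pstar_g ga)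
    also have "\<dots> = (g ^^ Suc m) a \<sqinter> (g ^^ Suc (Suc m)) a" by (simp only: gpow_inf sw)
    also have "\<dots> \<le> (g ^^ Suc (Suc m)) a" by simp
    finally show "(g ^^ (n - 1)) a \<sqinter> (g ^^ n) a \<le> (g ^^ Suc n) a" using nm by simp
  qed
  have h: "hgt (dual_space :: 'a set set)"
    unfolding hgt_def dual_space_def using regular_height[OF assms(2)] by blast
  have zd: "min (comp_dist dual_space x y) (comp_dist dual_space x (zeta dm y)) = enat n"
    using assms(6) unfolding zeta_dist_def .
  obtain t0 where t0: "t0 \<in> dual_space" "comp_path dual_space x t0 n"
    "\<forall>k<n. \<not> comp_path dual_space x t0 k \<and> \<not> comp_path dual_space x (zeta dm t0) k"
  proof (cases "comp_dist dual_space x y \<le> comp_dist dual_space x (zeta dm y)")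
    case True
    then have "comp_dist dual_space x y = enat n" "enat n \<le> comp_dist dual_space x (zeta dm y)"
      using zd by (auto simp: min_def)
    then have a: "comp_path dual_space x y n" "\<forall>k<n. \<not> comp_path dual_space x y k"
      "\<forall>k<n. \<not> comp_path dual_space x (zeta dm y) k"
      using cd_eq cd_ge by blast+
    show ?thesis by (rule that[of y]) (use a assms(4) in auto)
  next
    case False
    then have "comp_dist dual_space x (zeta dm y) = enat n" "enat n \<le> comp_dist dual_space x y"
      using zd by (auto simp: min_def)
    then have a: "comp_path dual_space x (zeta dm y) n" "\<forall>k<n. \<not> comp_path dual_space x (zeta dm y) k"
      "\<forall>k<n. \<not> comp_path dual_space x y k"
      using cd_eq cd_ge by blast+
    show ?thesis by (rule that[of "zeta dm y"]) (use a zeta_ds[OF assms(4)] in auto)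
  qed
  show False
  proof (cases "mn dual_space x")
    case True
    show False by (rule core[OF h E assms(5) True t0(1) t0(2) t0(3)])
  next
    case False
    then obtain K where K: "K \<in> dual_space" "K \<subseteq> x" "K \<noteq> x" using assms(3) unfolding mn_def by blast
    have mnz: "mn dual_space (zeta dm x)" unfolding mn_def
    proof (intro conjI ballI impI)
      show "zeta dm x \<in> dual_space" using zeta_ds assms(3) by blast
      fix L assume L: "L \<in> dual_space" "L \<subseteq> zeta dm x"
      show "L = zeta dm x"
      proof (rule ccontr)
        assume "L \<noteq> zeta dm x"
        then have "x \<subseteq> zeta dm L" "x \<noteq> zeta dm L" using zeta_anti[OF L(2)] zeta_inj by auto
        then show False using h[unfolded hgt_def, rule_format, of K x "zeta dm L"] K assms(3) zeta_ds[OF L(1)]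
          by blast
      qed
    qed
    have shortz: "\<forall>k<n. \<not> comp_path dual_space (zeta dm x) (zeta dm t0) k \<and> \<not> comp_path dual_space (zeta dm x) (zeta dm (zeta dm t0)) k"
    proof (intro allI impI conjI notI)
      fix k assume "k < n" "comp_path dual_space (zeta dm x) (zeta dm t0) k"
      then have "comp_path dual_space x t0 k" using cp_map[of "zeta dm x" "zeta dm t0" k] by simp
      then show False using t0(3) \<open>k < n\<close> by blast
    next
      fix k assume "k < n" "comp_path dual_space (zeta dm x) (zeta dm (zeta dm t0)) k"
      then have "comp_path dual_space x (zeta dm t0) k" using cp_map[of "zeta dm x" "zeta dm (zeta dm t0)" k] by simp
      then show False using t0(3) \<open>k < n\<close> by blast
    qed
    show False by (rule core[OF h E assms(5) mnz zeta_ds[OF t0(1)] cp_map[OF t0(2)] shortz])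
  qed
qed

end
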